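(* Let $e\geq 2$, $N$ cyclic of order $2^e$, and let $G$ be a non-regular transitive subgroup of $\mathrm{Hol}(N)$. Then $|Z(G)|\cdot|[G,G]|=2^e$.
   Context: $\mathrm{Hol}(N)=N\rtimes\mathrm{Aut}(N)$ acts on $N$ by $(\eta,\alpha)\cdot x=\eta\,\alpha(x)$; a subgroup is transitive if it acts transitively on $N$, and regular if moreover the stabiliser of $1_N$ is trivial. $Z(G)$ is the centre and $[G,G]$ the commutator subgroup of $G$. *)

theory Defs
  imports "HOL-Algebra.Algebra"
begin

text \<open>Automorphisms of N, represented as extensional functions on the carrier,
  so that they are determined by their values on the carrier.\<close>
definition Aut_ext :: "('a, 'b) monoid_scheme \<Rightarrow> ('a \<Rightarrow> 'a) set" where
  "Aut_ext N = {\<alpha>. \<alpha> \<in> iso N N \<and> \<alpha> \<in> extensional (carrier N)}"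

definition holomorph :: "('a, 'b) monoid_scheme \<Rightarrow> ('a \<times> ('a \<Rightarrow> 'a)) monoid" where
  "holomorph N = \<lparr> carrier = carrier N \<times> Aut_ext N,
     monoid.mult = (\<lambda>(\<eta>, \<alpha>) (\<eta>', \<alpha>'). (\<eta> \<otimes>\<^bsub>N\<^esub> \<alpha> \<eta>', compose (carrier N) \<alpha> \<alpha>')),
     monoid.one = (\<one>\<^bsub>N\<^esub>, restrict id (carrier N)) \<rparr>"

definition hol_act :: "('a, 'b) monoid_scheme \<Rightarrow> 'a \<times> ('a \<Rightarrow> 'a) \<Rightarrow> 'a \<Rightarrow> 'a" where
  "hol_act N g x = fst g \<otimes>\<^bsub>N\<^esub> snd g x"

definition hol_transitive :: "('a, 'b) monoid_scheme \<Rightarrow> ('a \<times> ('a \<Rightarrow> 'a)) set \<Rightarrow> bool" where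
  "hol_transitive N G \<longleftrightarrow>
     (\<forall>x \<in> carrier N. \<forall>y \<in> carrier N. \<exists>g \<in> G. hol_act N g x = y)"

definition hol_regular :: "('a, 'b) monoid_scheme \<Rightarrow> ('a \<times> ('a \<Rightarrow> 'a)) set \<Rightarrow> bool" where
  "hol_regular N G \<longleftrightarrow> hol_transitive N G \<and>
     {g \<in> G. hol_act N g \<one>\<^bsub>N\<^esub> = \<one>\<^bsub>N\<^esub>} = {\<one>\<^bsub>holomorph N\<^esub>}"

definition group_center :: "('a, 'b) monoid_scheme \<Rightarrow> 'a set" where
  "group_center G = {z \<in> carrier G. \<forall>g \<in> carrier G. z \<otimes>\<^bsub>G\<^esub> g = g \<otimes>\<^bsub>G\<^esub> z}"

end

theory Submission
  imports Defs
begin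

lemma modrep: "(t::int) mod m = t - m * (t div m)"
  by (simp add: minus_div_mult_eq_mod[symmetric] mult.commute)

lemma geo_split: "(\<Sum>i<k+m. (\<mu>::int)^i) = (\<Sum>i<k. \<mu>^i) + \<mu>^k * (\<Sum>i<m. \<mu>^i)"
  by (induction m) (auto simp: power_add algebra_simps)

lemma geo_parity: "odd (\<mu>::int) \<Longrightarrow> even (\<Sum>i<k. \<mu>^i) \<longleftrightarrow> even k"
proof (induction k)
  case 0 then show ?case by simp
next
  case (Suc k)
  have "(\<Sum>i<Suc k. \<mu>^i) = (\<Sum>i<k. \<mu>^i) + \<mu>^k" by simp
  moreover have "odd (\<mu>^k)" using Suc.prems by simp
  ultimately show ?case using Suc.IH Suc.prems by simp
qed

lemma odd_pow2_dvd: assumes o: "odd (x::int)" shows "(2^j dvd x \<longleftrightarrow> j = 0)"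
proof (cases j)
  case 0 then show ?thesis by simp
next
  case (Suc j')
  have "(2::int) dvd 2^j" using Suc by simp
  hence "\<not> 2^j dvd x" using o dvd_trans[of 2 "2^j" x] by blast
  thus ?thesis using Suc by simp
qed

lemma two_w_dvd: assumes "odd (w::int)" shows "(2^j dvd (2*w*x) \<longleftrightarrow> (j = 0 \<or> 2^(j-1) dvd x))"
proof (cases j)
  case 0 then show ?thesis by simp
next
  case (Suc j')
  have cop: "coprime ((2::int)^Suc j') w" using assms by simp
  have "2^j dvd (2*w*x) \<longleftrightarrow> 2^Suc j' dvd w * (2*x)" using Suc by (simp add: ac_simps)
  also have "\<dots> \<longleftrightarrow> 2^Suc j' dvd (2*x)" using cop by (rule coprime_dvd_mult_right_iff)
  also have "\<dots> \<longleftrightarrow> 2^j' dvd x" by simp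
  finally show ?thesis using Suc by simp
qed

lemma geo_val:
  assumes mu: "\<mu> mod 4 = (1::int)"
  shows "(2::int)^j dvd (\<Sum>i<k. \<mu>^i) \<longleftrightarrow> 2^j dvd int k"
proof (induction k arbitrary: j rule: less_induct)
  case (less k)
  have oddmu: "odd \<mu>" using mu by presburger
  show ?case
  proof (cases "even k")
    case False
    have "odd (\<Sum>i<k. \<mu>^i)" using geo_parity[OF oddmu, of k] False by simp
    then show ?thesis using odd_pow2_dvd False by simp
  next
    case True
    then obtain m where k: "k = 2*m" by blast
    show ?thesis
    proof (cases "m = 0")
      case True then show ?thesis using k by simp
    next
      case False
      have "\<mu>^m mod 4 = (\<mu> mod 4)^m mod 4" by (rule power_mod[symmetric])
      hence "\<mu>^m mod 4 = 1" using mu by simp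
      moreover have "(1 + \<mu>^m) mod 4 = (1 + \<mu>^m mod 4) mod 4" by (rule mod_add_right_eq[symmetric])
      ultimately have "(1 + \<mu>^m) mod 4 = 2" by simp
      moreover have "1 + \<mu>^m = 4*((1+\<mu>^m) div 4) + (1 + \<mu>^m) mod 4"
        by (rule div_mult_mod_eq[symmetric, of "1+\<mu>^m" 4, simplified mult.commute])
      ultimately have "1 + \<mu>^m = 2*(2*((1+\<mu>^m) div 4) + 1)" by simp
      moreover have "odd (2*((1+\<mu>^m) div 4) + 1)" by simp
      ultimately obtain w where w: "1 + \<mu>^m = 2*w" "odd w" by blast
      have km: "k = m + m" using k by simp
      have "(\<Sum>i<k. \<mu>^i) = (\<Sum>i<m. \<mu>^i) + \<mu>^m * (\<Sum>i<m. \<mu>^i)"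
        unfolding km by (rule geo_split)
      also have "\<dots> = (1 + \<mu>^m) * (\<Sum>i<m. \<mu>^i)" by (simp add: distrib_right)
      finally have S: "(\<Sum>i<k. \<mu>^i) = 2*w*(\<Sum>i<m. \<mu>^i)" unfolding w(1) .
      have "m < k" using k False by simp
      have "2^j dvd (\<Sum>i<k. \<mu>^i) \<longleftrightarrow> (j = 0 \<or> 2^(j-1) dvd (\<Sum>i<m. \<mu>^i))"
        unfolding S by (rule two_w_dvd[OF w(2)])
      also have "\<dots> \<longleftrightarrow> (j = 0 \<or> 2^(j-1) dvd int m)" using less.IH[OF \<open>m < k\<close>] by simp
      also have "\<dots> \<longleftrightarrow> 2^j dvd (2*1*int m)" using two_w_dvd[of 1 j "int m"] by simp
      finally show ?thesis using k by simp
    qed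
  qed
qed

lemma card_mult_pow2:
  assumes "j \<le> e"
  shows "card {x::int. 0 \<le> x \<and> x < 2^e \<and> 2^j dvd x} = 2^(e-j)"
proof -
  have e: "(2::int)^e = 2^j * 2^(e-j)" using assms by (simp add: power_add[symmetric])
  have "{x::int. 0 \<le> x \<and> x < 2^e \<and> 2^j dvd x} = (\<lambda>k. 2^j*k) ` {0..<2^(e-j)}"
  proof (intro Set.set_eqI iffI)
    fix x assume xs: "x \<in> {x::int. 0 \<le> x \<and> x < 2^e \<and> 2^j dvd x}"
    then obtain k where x1: "x = 2^j * k" by auto
    have x2: "0 \<le> x" "x < 2^j * 2^(e-j)" using xs unfolding e by auto
    have "0 \<le> k" using x1 x2(1) by (simp add: zero_le_mult_iff)
    moreover have "k < 2^(e-j)" using x1 x2(2) by simp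
    ultimately show "x \<in> (\<lambda>k. 2^j*k) ` {0..<2^(e-j)}" using x1 by auto
  next
    fix x assume "x \<in> (\<lambda>k::int. 2^j*k) ` {0..<2^(e-j)}"
    then obtain k::int where k: "x = 2^j*k" "0 \<le> k" "k < 2^(e-j)" by auto
    have "x < 2^j * 2^(e-j)" using k by simp
    hence "x < 2^e" unfolding e .
    thus "x \<in> {x::int. 0 \<le> x \<and> x < 2^e \<and> 2^j dvd x}" using k by simp
  qed
  moreover have "inj_on (\<lambda>k::int. 2^j*k) {0..<2^(e-j)}" by (auto simp: inj_on_def)
  ultimately have "card {x::int. 0 \<le> x \<and> x < 2^e \<and> 2^j dvd x} = card {0..<(2::int)^(e-j)}"
    by (simp add: card_image)
  also have "\<dots> = nat (2^(e-j))" by simp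
  also have "\<dots> = 2^(e-j)" by (simp add: nat_power_eq)
  finally show ?thesis .
qed

lemma val_exists:
  assumes "(x::int) \<noteq> 0"
  shows "\<exists>v u. x = 2^v * u \<and> odd u"
proof -
  have "\<exists>k. \<not> (2::int)^k dvd x"
  proof
    have "\<bar>x\<bar> < 2^nat \<bar>x\<bar>" using less_exp[of "nat \<bar>x\<bar>"]
      by (metis abs_ge_zero int_nat_eq nat_less_eq_zless of_nat_less_numeral_power_cancel_iff of_nat_numeral)
    thus "\<not> (2::int)^nat \<bar>x\<bar> dvd x" using assms dvd_imp_le_int[of x "2^nat \<bar>x\<bar>"] by force
  qed
  define k where "k = (LEAST k. \<not> (2::int)^k dvd x)"
  have k1: "\<not> (2::int)^k dvd x" unfolding k_def by (rule LeastI_ex) fact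
  have "k \<noteq> 0"
  proof
    assume "k = 0" thus False using k1 by simp
  qed
  then obtain v where v: "k = Suc v" by (cases k) auto
  have "(2::int)^v dvd x" using not_less_Least[of v "\<lambda>k. \<not> (2::int)^k dvd x"] v k_def by auto
  then obtain u where u: "x = 2^v * u" by blast
  have "odd u" using k1 v u by auto
  thus ?thesis using u by blast
qed

lemma E_mult_gen: "((1::int) - (va*vd) mod vm + vL*((vb+va*vc) mod vm)) mod vm = ((1 - va + vL*vb) mod vm + va*((1 - vd + vL*vc) mod vm)) mod vm"
  apply (simp only: mod_eq_dvd_iff modrep[of "va*vd"] modrep[of "vb+va*vc"] modrep[of "1 - va + vL*vb"] modrep[of "1 - vd + vL*vc"])
  by Groebner_Basis.algebra

lemma comm_gen: "(vb * ((1 - vd + vL*vc) mod vm) - vc * ((1 - va + vL*vb) mod vm)) mod vm = ((vb::int) + va*vc - (vc + vd*vb)) mod vm"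
  apply (simp only: mod_eq_dvd_iff modrep[of "1 - vd + vL*vc"] modrep[of "1 - va + vL*vb"])
  by Groebner_Basis.algebra

lemma mod_unique: "0 \<le> (x::int) \<Longrightarrow> x < m \<Longrightarrow> m dvd (x - vX) \<Longrightarrow> x = vX mod m"
  by (metis mod_eq_dvd_iff mod_pos_pos_trivial)

lemma odd_coprime_pow2: "odd (a::int) \<Longrightarrow> coprime a (2^e)"
  by simp


lemma help1: "(vu * ((vp*vq) mod vm)) mod vm = ((vq::int)*vp) mod vm \<Longrightarrow> vm dvd (vu - 1) * (vq*vp)"
  apply (simp only: modrep[of "vp*vq"] modrep[of "vq*vp"] modrep[of "vu * (vp*vq - vm * (vp*vq div vm))"])
  by Groebner_Basis.algebra

lemma help2: "(vw + 1 * ((vc + vd*vb) mod vm)) mod vm = ((vb::int) + va*vc) mod vm \<Longrightarrow> vm dvd vw - (vb + va*vc - (vc + vd*vb))"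
  apply (simp only: modrep[of "vc + vd*vb"] modrep[of "vb + va*vc"] modrep[of "vw + 1 * (vc + vd*vb - vm * ((vc + vd*vb) div vm))"])
  by Groebner_Basis.algebra

lemma help3: "((x::int) mod m = y mod m) \<longleftrightarrow> ((x - y) mod m = 0)"
  by (simp only: mod_eq_dvd_iff dvd_eq_mod_eq_0)


lemma help4: "(m::int) dvd x \<Longrightarrow> -m < x \<Longrightarrow> x < m \<Longrightarrow> x = 0"
proof (rule ccontr)
  assume "m dvd x" "-m < x" "x < m" "x \<noteq> 0"
  hence "\<bar>m\<bar> \<le> \<bar>x\<bar>" using dvd_imp_le_int by blast
  thus False using \<open>-m < x\<close> \<open>x < m\<close> by linarith
qed

lemma help5: "vE = vP * vu \<Longrightarrow> vx = vP * vx' \<Longrightarrow> vp*vu + vq*vm = 1 \<Longrightarrow> vK = vx'*vp - vm*vD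
   \<Longrightarrow> (vm::int) dvd (vE * vK - vx)"
  by Groebner_Basis.algebra




lemma modl: "((u mod (m::int)) + (v mod m) * w) mod m = (u + v*w) mod m"
proof -
  have "(u mod m + (v mod m) * w) mod m = (u + (v mod m) * w) mod m" by (rule mod_add_left_eq)
  also have "\<dots> = (u + ((v mod m) * w) mod m) mod m" by (rule mod_add_right_eq[symmetric])
  also have "\<dots> = (u + (v * w) mod m) mod m" by (simp only: mod_mult_left_eq)
  also have "\<dots> = (u + v * w) mod m" by (rule mod_add_right_eq)
  finally show ?thesis .
qed

locale cyc = group N for N :: "('a,'b) monoid_scheme" (structure) +
  fixes g :: 'a and e :: nat
  assumes g_in: "g \<in> carrier N"
  and gen: "carrier N = range (\<lambda>k::int. g [^] k)"
  and ord_g: "ord g = 2^e"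
  and e2: "e \<ge> 2"
begin

abbreviation "n \<equiv> (2::int)^e"

lemma n_pos: "n > 0" by simp

lemma pow_eq_iff: "g [^] (i::int) = g [^] (j::int) \<longleftrightarrow> i mod n = j mod n"
  using int_pow_eq[OF g_in, of i j] ord_g by (simp add: mod_eq_dvd_iff dvd_diff_commute)

definition lg :: "'a \<Rightarrow> int" where
  "lg x = (SOME k. 0 \<le> k \<and> k < n \<and> x = g [^] k)"

lemma lg_ex: assumes "x \<in> carrier N" shows "\<exists>k. 0 \<le> k \<and> k < n \<and> x = g [^] k"
proof -
  from assms gen obtain k::int where "x = g [^] k" by auto
  hence "x = g [^] (k mod n)" using pow_eq_iff by simp
  thus ?thesis by (intro exI[of _ "k mod n"]) simp
qed

lemma lg: assumes "x \<in> carrier N" shows "0 \<le> lg x" "lg x < n" "x = g [^] lg x"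
  using someI_ex[OF lg_ex[OF assms]] unfolding lg_def by auto

lemma lg_pow [simp]: "lg (g [^] (k::int)) = k mod n"
proof -
  have c: "g [^] k \<in> carrier N" using g_in by simp
  have "g [^] lg (g [^] k) = g [^] k" using lg(3)[OF c] by simp
  hence "lg (g [^] k) mod n = k mod n" using pow_eq_iff by blast
  thus ?thesis using lg(1,2)[OF c] by simp
qed

lemma lg_inj: "x \<in> carrier N \<Longrightarrow> y \<in> carrier N \<Longrightarrow> lg x = lg y \<Longrightarrow> x = y"
  using lg(3) by metis

lemma aut_pow:
  assumes "\<alpha> \<in> Aut_ext N"
  shows "\<alpha> (g [^] (k::int)) = g [^] (lg (\<alpha> g) * k)"
proof -
  have h: "\<alpha> \<in> hom N N" using assms unfolding Aut_ext_def iso_def by auto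
  have ag: "\<alpha> g \<in> carrier N" using h g_in by (auto simp: hom_def)
  have "\<alpha> (g [^] k) = (\<alpha> g) [^] k" using hom_int_pow[OF h g_in] is_group by simp
  also have "\<dots> = (g [^] lg (\<alpha> g)) [^] k" using lg(3)[OF ag] by simp
  also have "\<dots> = g [^] (lg (\<alpha> g) * k)" using int_pow_pow[OF g_in] by simp
  finally show ?thesis .
qed

lemma aut_closed: "\<alpha> \<in> Aut_ext N \<Longrightarrow> x \<in> carrier N \<Longrightarrow> \<alpha> x \<in> carrier N"
  unfolding Aut_ext_def iso_def hom_def by auto

lemma aut_odd:
  assumes "\<alpha> \<in> Aut_ext N"
  shows "odd (lg (\<alpha> g))"
proof -
  have "bij_betw \<alpha> (carrier N) (carrier N)" using assms unfolding Aut_ext_def iso_def by auto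
  then obtain x where x: "x \<in> carrier N" "\<alpha> x = g" using g_in by (metis bij_betw_iff_bijections)
  have "g [^] (1::int) = \<alpha> (g [^] lg x)" using x lg(3)[OF x(1)] g_in by simp
  also have "\<dots> = g [^] (lg (\<alpha> g) * lg x)" by (rule aut_pow[OF assms])
  finally have "1 mod n = (lg (\<alpha> g) * lg x) mod n" using pow_eq_iff by blast
  hence "(lg (\<alpha> g) * lg x) mod n = 1" using e2 by simp
  moreover have "(2::int) dvd n" using e2 by (simp add: dvd_power)
  ultimately have "(lg (\<alpha> g) * lg x) mod 2 = 1" by (metis mod_mod_cancel one_mod_two_eq_one)
  hence "odd (lg (\<alpha> g) * lg x)" by presburger
  thus ?thesis by simp
qed


lemma aut_hom: "\<alpha> \<in> Aut_ext N \<Longrightarrow> \<alpha> \<in> hom N N"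
  unfolding Aut_ext_def iso_def by auto

lemma aut_mult: "\<alpha> \<in> Aut_ext N \<Longrightarrow> x \<in> carrier N \<Longrightarrow> y \<in> carrier N \<Longrightarrow> \<alpha> (x \<otimes> y) = \<alpha> x \<otimes> \<alpha> y"
  using aut_hom by (auto simp: hom_def)

lemma aut_ext: "\<alpha> \<in> Aut_ext N \<Longrightarrow> \<alpha> \<in> extensional (carrier N)"
  unfolding Aut_ext_def by auto

lemma aut_compose: "\<alpha> \<in> Aut_ext N \<Longrightarrow> \<beta> \<in> Aut_ext N \<Longrightarrow> compose (carrier N) \<alpha> \<beta> \<in> Aut_ext N"
proof -
  assume a: "\<alpha> \<in> Aut_ext N" and b: "\<beta> \<in> Aut_ext N"
  have "\<alpha> \<circ> \<beta> \<in> iso N N" using a b unfolding Aut_ext_def using iso_set_trans by blast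
  hence "compose (carrier N) \<alpha> \<beta> \<in> iso N N" by (rule iso_eq) (simp add: compose_eq)
  thus ?thesis unfolding Aut_ext_def compose_def by auto
qed

lemma aut_id: "restrict id (carrier N) \<in> Aut_ext N"
proof -
  have "restrict id (carrier N) \<in> iso N N" by (rule iso_eq[OF id_iso]) simp
  thus ?thesis unfolding Aut_ext_def by auto
qed

abbreviation "HH \<equiv> holomorph N"

lemma HH_carrier: "carrier HH = carrier N \<times> Aut_ext N"
  by (simp add: holomorph_def)

lemma HH_mult: "x \<otimes>\<^bsub>HH\<^esub> y = (fst x \<otimes> snd x (fst y), compose (carrier N) (snd x) (snd y))"
  by (simp add: holomorph_def case_prod_beta)

lemma HH_one: "\<one>\<^bsub>HH\<^esub> = (\<one>, restrict id (carrier N))"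
  by (simp add: holomorph_def)

lemma HH_group: "group HH"
proof (rule groupI)
  fix x y assume x: "x \<in> carrier HH" and y: "y \<in> carrier HH"
  show "x \<otimes>\<^bsub>HH\<^esub> y \<in> carrier HH" using x y
    by (auto simp: HH_carrier HH_mult aut_closed aut_compose)
next
  show "\<one>\<^bsub>HH\<^esub> \<in> carrier HH" by (simp add: HH_carrier HH_one aut_id)
next
  fix x y z assume x: "x \<in> carrier HH" and y: "y \<in> carrier HH" and z: "z \<in> carrier HH"
  obtain a \<alpha> where xa: "x = (a, \<alpha>)" "a \<in> carrier N" "\<alpha> \<in> Aut_ext N" using x HH_carrier by auto
  obtain b \<beta> where yb: "y = (b, \<beta>)" "b \<in> carrier N" "\<beta> \<in> Aut_ext N" using y HH_carrier by auto
  obtain c \<gamma> where zc: "z = (c, \<gamma>)" "c \<in> carrier N" "\<gamma> \<in> Aut_ext N" using z HH_carrier by auto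
  have g1: "\<gamma> \<in> carrier N \<rightarrow> carrier N" using zc aut_closed by auto
  have "a \<otimes> \<alpha> b \<otimes> compose (carrier N) \<alpha> \<beta> c = a \<otimes> \<alpha> (b \<otimes> \<beta> c)"
    using xa yb zc by (simp add: compose_eq aut_mult aut_closed m_assoc)
  moreover have "compose (carrier N) (compose (carrier N) \<alpha> \<beta>) \<gamma> = compose (carrier N) \<alpha> (compose (carrier N) \<beta> \<gamma>)"
    using compose_assoc[OF g1, of \<alpha> \<beta>] by simp
  ultimately show "(x \<otimes>\<^bsub>HH\<^esub> y) \<otimes>\<^bsub>HH\<^esub> z = x \<otimes>\<^bsub>HH\<^esub> (y \<otimes>\<^bsub>HH\<^esub> z)"
    using xa yb zc by (simp add: HH_mult compose_eq)
next
  fix x assume x: "x \<in> carrier HH"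
  obtain a \<alpha> where xa: "x = (a, \<alpha>)" "a \<in> carrier N" "\<alpha> \<in> Aut_ext N" using x HH_carrier by auto
  have "compose (carrier N) (restrict id (carrier N)) \<alpha> = \<alpha>"
    by (rule extensionalityI[OF _ aut_ext[OF xa(3)]]) (auto simp: compose_def aut_closed[OF xa(3)])
  thus "\<one>\<^bsub>HH\<^esub> \<otimes>\<^bsub>HH\<^esub> x = x" using xa by (simp add: HH_mult HH_one)
next
  fix x assume x: "x \<in> carrier HH"
  obtain a \<alpha> where xa: "x = (a, \<alpha>)" "a \<in> carrier N" "\<alpha> \<in> Aut_ext N" using x HH_carrier by auto
  have iso: "\<alpha> \<in> iso N N" using xa unfolding Aut_ext_def by auto
  define \<beta> where "\<beta> = restrict (inv_into (carrier N) \<alpha>) (carrier N)"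
  have "\<beta> \<in> iso N N" unfolding \<beta>_def by (rule iso_eq[OF iso_set_sym[OF iso]]) simp
  hence b: "\<beta> \<in> Aut_ext N" unfolding Aut_ext_def \<beta>_def by auto
  have bij: "bij_betw \<alpha> (carrier N) (carrier N)" using iso unfolding iso_def by auto
  have inj: "inj_on \<alpha> (carrier N)" using bij by (rule bij_betw_imp_inj_on)
  have ba: "\<And>y. y \<in> carrier N \<Longrightarrow> \<beta> (\<alpha> y) = y"
    unfolding \<beta>_def using inj by (simp add: aut_closed[OF xa(3)])
  have c1: "compose (carrier N) \<beta> \<alpha> = restrict id (carrier N)"
    unfolding compose_def by (rule restrict_ext) (simp add: ba)
  have c2: "\<beta> (inv a) \<otimes> \<beta> a = \<one>"
    using xa b by (metis aut_mult aut_hom inv_closed l_inv hom_one is_group group_hom.hom_one group_hom_axioms.intro group_hom_def)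
  show "\<exists>y\<in>carrier HH. y \<otimes>\<^bsub>HH\<^esub> x = \<one>\<^bsub>HH\<^esub>"
    by (rule bexI[of _ "(\<beta> (inv a), \<beta>)"]) (use xa b c1 c2 in \<open>auto simp: HH_mult HH_one HH_carrier aut_closed\<close>)
qed


end

sublocale cyc \<subseteq> H: group "holomorph N" by (rule HH_group)

context cyc begin

definition bb :: "'a \<times> ('a \<Rightarrow> 'a) \<Rightarrow> int" where "bb h = lg (fst h)"
definition aa :: "'a \<times> ('a \<Rightarrow> 'a) \<Rightarrow> int" where "aa h = lg (snd h g)"

lemma HH_memD: "h \<in> carrier HH \<Longrightarrow> fst h \<in> carrier N \<and> snd h \<in> Aut_ext N"
  by (auto simp: HH_carrier)

lemma bb_range: "h \<in> carrier HH \<Longrightarrow> 0 \<le> bb h \<and> bb h < n"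
  unfolding bb_def using HH_memD[of h] lg(1,2)[of "fst h"] by simp

lemma aa_range: "h \<in> carrier HH \<Longrightarrow> 0 \<le> aa h \<and> aa h < n"
  unfolding aa_def using HH_memD[of h] lg(1,2)[of "snd h g"] aut_closed[of "snd h" g] g_in by simp

lemma aa_odd: "h \<in> carrier HH \<Longrightarrow> odd (aa h)"
  unfolding aa_def using HH_memD[of h] aut_odd[of "snd h"] by simp

lemma fst_eq: "h \<in> carrier HH \<Longrightarrow> fst h = g [^] bb h"
  unfolding bb_def using HH_memD[of h] lg(3)[of "fst h"] by simp

lemma snd_pow: "h \<in> carrier HH \<Longrightarrow> snd h (g [^] (k::int)) = g [^] (aa h * k)"
  unfolding aa_def using HH_memD[of h] aut_pow[of "snd h" k] by simp

lemma bb_mult: "x \<in> carrier HH \<Longrightarrow> y \<in> carrier HH \<Longrightarrow> bb (x \<otimes>\<^bsub>HH\<^esub> y) = (bb x + aa x * bb y) mod n"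
proof -
  assume x: "x \<in> carrier HH" and y: "y \<in> carrier HH"
  have "fst (x \<otimes>\<^bsub>HH\<^esub> y) = g [^] bb x \<otimes> g [^] (aa x * bb y)"
    using fst_eq[OF x] fst_eq[OF y] snd_pow[OF x] by (simp add: HH_mult)
  also have "\<dots> = g [^] (bb x + aa x * bb y)" using int_pow_mult[OF g_in] by simp
  finally show ?thesis unfolding bb_def by simp
qed

lemma aa_mult: "x \<in> carrier HH \<Longrightarrow> y \<in> carrier HH \<Longrightarrow> aa (x \<otimes>\<^bsub>HH\<^esub> y) = (aa x * aa y) mod n"
proof -
  assume x: "x \<in> carrier HH" and y: "y \<in> carrier HH"
  have sy: "snd y g = g [^] aa y" using snd_pow[OF y, of 1] g_in by simp
  have "snd (x \<otimes>\<^bsub>HH\<^esub> y) g = snd x (g [^] aa y)"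
    using sy g_in by (simp add: HH_mult compose_eq)
  also have "\<dots> = g [^] (aa x * aa y)" using snd_pow[OF x] by simp
  finally show ?thesis unfolding aa_def by simp
qed

lemma e_pos: "0 < e" using e2 by simp

lemma n_ge4: "n \<ge> 4"
proof -
  have "(2::int)^2 \<le> 2^e" using e2 by (intro power_increasing) auto
  thus ?thesis by simp
qed

lemma one_mod: "(1::int) mod n = 1"
  using n_ge4 by (intro mod_pos_pos_trivial) auto

lemma bb_one: "bb \<one>\<^bsub>HH\<^esub> = 0"
proof -
  have "lg \<one> = lg (g [^] (0::int))" by simp
  also have "\<dots> = 0" by (simp only: lg_pow) simp
  finally show ?thesis unfolding bb_def HH_one by simp
qed

lemma aa_one: "aa \<one>\<^bsub>HH\<^esub> = 1"
proof -
  have "lg g = lg (g [^] (1::int))" using g_in by simp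
  also have "\<dots> = 1 mod n" by (rule lg_pow)
  also have "\<dots> = 1" by (rule one_mod)
  finally show ?thesis unfolding aa_def HH_one using g_in by simp
qed

lemma coord_inj:
  assumes x: "x \<in> carrier HH" and y: "y \<in> carrier HH" and b: "bb x = bb y" and a: "aa x = aa y"
  shows "x = y"
proof -
  have f: "fst x = fst y" using fst_eq[OF x] fst_eq[OF y] b by simp
  have "snd x = snd y"
  proof (rule extensionalityI[OF aut_ext aut_ext])
    show "snd x \<in> Aut_ext N" "snd y \<in> Aut_ext N" using x y HH_memD by auto
    fix z assume "z \<in> carrier N"
    then obtain k where "z = g [^] (k::int)" using gen by auto
    thus "snd x z = snd y z" using snd_pow[OF x] snd_pow[OF y] a by simp
  qed
  with f show ?thesis by (simp add: prod_eq_iff)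
qed

lemma coord_pow:
  assumes x: "x \<in> carrier HH"
  shows "aa (x [^]\<^bsub>HH\<^esub> (k::nat)) = (aa x ^ k) mod n \<and>
         bb (x [^]\<^bsub>HH\<^esub> k) = (bb x * (\<Sum>i<k. aa x ^ i)) mod n"
proof (induction k)
  case 0
  then show ?case using aa_one bb_one one_mod by simp
next
  case (Suc k)
  have c: "x [^]\<^bsub>HH\<^esub> k \<in> carrier HH" using x by simp
  have "aa (x [^]\<^bsub>HH\<^esub> Suc k) = (aa (x [^]\<^bsub>HH\<^esub> k) * aa x) mod n"
    using aa_mult[OF c x] by simp
  also have "\<dots> = (aa x ^ k * aa x) mod n" unfolding Suc.IH[THEN conjunct1] by (rule mod_mult_left_eq)
  also have "\<dots> = (aa x ^ Suc k) mod n" by (simp only: power_Suc2)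
  finally have A: "aa (x [^]\<^bsub>HH\<^esub> Suc k) = (aa x ^ Suc k) mod n" .
  have "bb (x [^]\<^bsub>HH\<^esub> Suc k) = (bb (x [^]\<^bsub>HH\<^esub> k) + aa (x [^]\<^bsub>HH\<^esub> k) * bb x) mod n"
    unfolding Group.nat_pow_Suc by (rule bb_mult[OF c x])
  also have "\<dots> = (bb x * (\<Sum>i<k. aa x ^ i) + aa x ^ k * bb x) mod n" 
    unfolding Suc.IH[THEN conjunct1] Suc.IH[THEN conjunct2] by (rule modl)
  also have "\<dots> = (bb x * (\<Sum>i<Suc k. aa x ^ i)) mod n"
    unfolding sum.lessThan_Suc distrib_left mult.commute[of "aa x ^ k" "bb x"] ..
  finally have B: "bb (x [^]\<^bsub>HH\<^esub> Suc k) = (bb x * (\<Sum>i<Suc k. aa x ^ i)) mod n" .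
  show ?case by (rule conjI[OF A B])
qed

lemma coord_inv:
  assumes x: "x \<in> carrier HH"
  shows "(aa x * aa (inv\<^bsub>HH\<^esub> x)) mod n = 1 \<and> (bb x + aa x * bb (inv\<^bsub>HH\<^esub> x)) mod n = 0"
proof -
  have i: "inv\<^bsub>HH\<^esub> x \<in> carrier HH" using x by simp
  have e: "x \<otimes>\<^bsub>HH\<^esub> inv\<^bsub>HH\<^esub> x = \<one>\<^bsub>HH\<^esub>" using x by simp
  show ?thesis using aa_mult[OF x i] bb_mult[OF x i] aa_one bb_one unfolding e by simp
qed

end



locale mainloc = cyc +
  fixes G :: "('a \<times> ('a \<Rightarrow> 'a)) set"
  assumes sub: "subgroup G HH"
  and trans: "\<And>b. 0 \<le> b \<Longrightarrow> b < n \<Longrightarrow> \<exists>h\<in>G. bb h = b"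
  and nonreg: "\<exists>\<delta>\<in>G. bb \<delta> = 0 \<and> aa \<delta> \<noteq> 1"
begin

lemma G_sub: "G \<subseteq> carrier HH" by (rule subgroup.subset[OF sub])
lemma G_carr: "x \<in> G \<Longrightarrow> x \<in> carrier HH" using G_sub by blast
lemma G_mult: "x \<in> G \<Longrightarrow> y \<in> G \<Longrightarrow> x \<otimes>\<^bsub>HH\<^esub> y \<in> G" by (rule subgroup.m_closed[OF sub])
lemma G_inv: "x \<in> G \<Longrightarrow> inv\<^bsub>HH\<^esub> x \<in> G" by (rule subgroup.m_inv_closed[OF sub])
lemma G_one: "\<one>\<^bsub>HH\<^esub> \<in> G" by (rule subgroup.one_closed[OF sub])

definition g1 where "g1 = (SOME h. h \<in> G \<and> bb h = 1)"

lemma g1: "g1 \<in> G \<and> bb g1 = 1"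
proof -
  have "\<exists>h\<in>G. bb h = 1" using trans[of 1] n_ge4 by simp
  thus ?thesis unfolding g1_def by (metis (mono_tags, lifting) someI_ex)
qed

definition lam where "lam = aa g1 - 1"
definition E where "E h = (1 - aa h + lam * bb h) mod n"

lemma lam_even: "even lam"
  unfolding lam_def using aa_odd[OF G_carr] g1 by simp

lemma E_range: "0 \<le> E h \<and> E h < n"
  unfolding E_def by simp

lemma E_g1: "E g1 = 0"
  unfolding E_def lam_def using g1 by simp

lemma E_one: "E \<one>\<^bsub>HH\<^esub> = 0"
  unfolding E_def using aa_one bb_one by simp

lemma E_mult: "x \<in> carrier HH \<Longrightarrow> y \<in> carrier HH \<Longrightarrow> E (x \<otimes>\<^bsub>HH\<^esub> y) = (E x + aa x * E y) mod n"
  unfolding E_def aa_mult bb_mult by (rule E_mult_gen)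

lemma comm_iff:
  assumes x: "x \<in> carrier HH" and y: "y \<in> carrier HH"
  shows "x \<otimes>\<^bsub>HH\<^esub> y = y \<otimes>\<^bsub>HH\<^esub> x \<longleftrightarrow> (bb x * E y - bb y * E x) mod n = 0"
proof -
  have xy: "x \<otimes>\<^bsub>HH\<^esub> y \<in> carrier HH" "y \<otimes>\<^bsub>HH\<^esub> x \<in> carrier HH" using x y by auto
  have a: "aa (x \<otimes>\<^bsub>HH\<^esub> y) = aa (y \<otimes>\<^bsub>HH\<^esub> x)" using aa_mult[OF x y] aa_mult[OF y x] by (simp add: mult.commute)
  have "x \<otimes>\<^bsub>HH\<^esub> y = y \<otimes>\<^bsub>HH\<^esub> x \<longleftrightarrow> bb (x \<otimes>\<^bsub>HH\<^esub> y) = bb (y \<otimes>\<^bsub>HH\<^esub> x)"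
    using coord_inj[OF xy(1) xy(2) _ a] by metis
  also have "\<dots> \<longleftrightarrow> (bb x + aa x * bb y) mod n = (bb y + aa y * bb x) mod n"
    using bb_mult[OF x y] bb_mult[OF y x] by simp
  also have "\<dots> \<longleftrightarrow> (bb x + aa x * bb y - (bb y + aa y * bb x)) mod n = 0"
    by (rule help3)
  also have "\<dots> \<longleftrightarrow> (bb x * E y - bb y * E x) mod n = 0"
    unfolding E_def comm_gen ..
  finally show ?thesis .
qed

lemma comm_coords:
  assumes x: "x \<in> carrier HH" and y: "y \<in> carrier HH"
  defines "u \<equiv> x \<otimes>\<^bsub>HH\<^esub> y \<otimes>\<^bsub>HH\<^esub> inv\<^bsub>HH\<^esub> x \<otimes>\<^bsub>HH\<^esub> inv\<^bsub>HH\<^esub> y"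
  shows "aa u = 1 \<and> bb u = (bb x * E y - bb y * E x) mod n"
proof -
  have u: "u \<in> carrier HH" unfolding u_def using x y by simp
  have yx: "y \<otimes>\<^bsub>HH\<^esub> x \<in> carrier HH" using x y by simp
  have eq: "u \<otimes>\<^bsub>HH\<^esub> (y \<otimes>\<^bsub>HH\<^esub> x) = x \<otimes>\<^bsub>HH\<^esub> y"
  proof -
    have ix: "inv\<^bsub>HH\<^esub> x \<in> carrier HH" and iy: "inv\<^bsub>HH\<^esub> y \<in> carrier HH" using x y by auto
    have xy: "x \<otimes>\<^bsub>HH\<^esub> y \<in> carrier HH" using x y by simp
    have xyi: "x \<otimes>\<^bsub>HH\<^esub> y \<otimes>\<^bsub>HH\<^esub> inv\<^bsub>HH\<^esub> x \<in> carrier HH" using x y by simp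
    have c1: "inv\<^bsub>HH\<^esub> y \<otimes>\<^bsub>HH\<^esub> (y \<otimes>\<^bsub>HH\<^esub> x) = x"
      using H.m_assoc[OF iy y x, symmetric] H.l_inv[OF y] H.l_one[OF x] by simp
    have "u \<otimes>\<^bsub>HH\<^esub> (y \<otimes>\<^bsub>HH\<^esub> x) = (x \<otimes>\<^bsub>HH\<^esub> y \<otimes>\<^bsub>HH\<^esub> inv\<^bsub>HH\<^esub> x) \<otimes>\<^bsub>HH\<^esub> (inv\<^bsub>HH\<^esub> y \<otimes>\<^bsub>HH\<^esub> (y \<otimes>\<^bsub>HH\<^esub> x))"
      unfolding u_def by (rule H.m_assoc[OF xyi iy yx])
    also have "\<dots> = (x \<otimes>\<^bsub>HH\<^esub> y \<otimes>\<^bsub>HH\<^esub> inv\<^bsub>HH\<^esub> x) \<otimes>\<^bsub>HH\<^esub> x" unfolding c1 ..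
    also have "\<dots> = (x \<otimes>\<^bsub>HH\<^esub> y) \<otimes>\<^bsub>HH\<^esub> (inv\<^bsub>HH\<^esub> x \<otimes>\<^bsub>HH\<^esub> x)" by (rule H.m_assoc[OF xy ix x])
    also have "\<dots> = x \<otimes>\<^bsub>HH\<^esub> y" using H.l_inv[OF x] H.r_one[OF xy] by simp
    finally show ?thesis .
  qed
  have "aa (u \<otimes>\<^bsub>HH\<^esub> (y \<otimes>\<^bsub>HH\<^esub> x)) = aa (x \<otimes>\<^bsub>HH\<^esub> y)" using eq by simp
  hence "(aa u * ((aa y * aa x) mod n)) mod n = (aa x * aa y) mod n"
    unfolding aa_mult[OF u yx] aa_mult[OF y x] aa_mult[OF x y] .
  hence "n dvd (aa u - 1) * (aa x * aa y)" by (rule help1)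
  moreover have "coprime n (aa x * aa y)" using aa_odd[OF x] aa_odd[OF y] by simp
  ultimately have "n dvd (aa u - 1)" using coprime_dvd_mult_left_iff by blast
  hence A: "aa u = 1" using aa_range[OF u] mod_unique[of "aa u" n 1] one_mod by simp
  have "bb (u \<otimes>\<^bsub>HH\<^esub> (y \<otimes>\<^bsub>HH\<^esub> x)) = bb (x \<otimes>\<^bsub>HH\<^esub> y)" using eq by simp
  hence "(bb u + 1 * ((bb y + aa y * bb x) mod n)) mod n = (bb x + aa x * bb y) mod n"
    unfolding bb_mult[OF u yx] bb_mult[OF y x] bb_mult[OF x y] A .
  hence "n dvd bb u - (bb x + aa x * bb y - (bb y + aa y * bb x))" by (rule help2)
  hence "bb u = (bb x + aa x * bb y - (bb y + aa y * bb x)) mod n"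
    using bb_range[OF u] mod_unique by simp
  also have "\<dots> = (bb x * E y - bb y * E x) mod n"
    unfolding E_def comm_gen ..
  finally show ?thesis using A by simp
qed


lemma subgroup_pow_closed: "subgroup S HH \<Longrightarrow> c \<in> S \<Longrightarrow> c [^]\<^bsub>HH\<^esub> (k::nat) \<in> S"
proof (induction k)
  case 0 then show ?case using subgroup.one_closed by simp
next
  case (Suc k) then show ?case unfolding Group.nat_pow_Suc by (simp add: subgroup.m_closed)
qed

lemma pow2_dvd_n: "j \<le> e \<Longrightarrow> (2::int)^j dvd n"
  by (rule le_imp_power_dvd)

definition eps where "eps = (LEAST k. \<exists>h\<in>G. \<not> (2::int)^(Suc k) dvd E h)"

lemma delta: obtains \<delta> where "\<delta> \<in> G" "bb \<delta> = 0" "aa \<delta> \<noteq> 1"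
  using nonreg by blast

lemma E_delta: assumes "\<delta> \<in> G" "bb \<delta> = 0" "aa \<delta> \<noteq> 1" shows "0 < E \<delta>"
proof -
  have r: "0 \<le> aa \<delta>" "aa \<delta> < n" using aa_range[OF G_carr[OF assms(1)]] by auto
  have "E \<delta> = (1 - aa \<delta>) mod n" unfolding E_def using assms(2) by simp
  moreover have "(1 - aa \<delta>) mod n \<noteq> 0"
  proof
    assume "(1 - aa \<delta>) mod n = 0"
    hence "n dvd (1 - aa \<delta>)" by (simp add: dvd_eq_mod_eq_0)
    hence "1 - aa \<delta> = 0" using r n_ge4 by (intro help4[of n]) auto
    thus False using assms(3) by simp
  qed
  moreover have "0 \<le> E \<delta>" using E_range[of \<delta>] by simp
  ultimately show ?thesis by linarith
qed

lemma eps_ex: "\<exists>h\<in>G. \<not> (2::int)^(Suc (e - 1)) dvd E h"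
proof -
  obtain \<delta> where d: "\<delta> \<in> G" "bb \<delta> = 0" "aa \<delta> \<noteq> 1" by (rule delta)
  have "Suc (e - 1) = e" using e2 by simp
  moreover have "\<not> n dvd E \<delta>"
  proof
    assume "n dvd E \<delta>"
    hence "E \<delta> = 0" using E_range[of \<delta>] by (intro help4[of n]) auto
    thus False using E_delta[OF d] by simp
  qed
  ultimately show ?thesis using d(1) by auto
qed

lemma eps_le: "eps \<le> e - 1"
  unfolding eps_def by (rule Least_le) (rule eps_ex)

lemma eps_lt: "eps < e" using eps_le e2 by simp

lemma eps_dvd: "h \<in> G \<Longrightarrow> (2::int)^eps dvd E h"
proof (cases eps)
  case 0 then show ?thesis by simp
next
  case (Suc k)
  have "k < eps" using Suc by simp
  hence "\<not> (\<exists>h\<in>G. \<not> (2::int)^(Suc k) dvd E h)" unfolding eps_def by (rule not_less_Least)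
  moreover assume "h \<in> G"
  ultimately have "(2::int)^(Suc k) dvd E h" by blast
  thus ?thesis using Suc by simp
qed

definition tt where "tt = (SOME t. t \<in> G \<and> \<not> (2::int)^(Suc eps) dvd E t)"

lemma tt: "tt \<in> G" "\<not> (2::int)^(Suc eps) dvd E tt"
proof -
  have "\<exists>t\<in>G. \<not> (2::int)^(Suc eps) dvd E t" unfolding eps_def by (rule LeastI_ex) (rule exI, rule eps_ex)
  hence "tt \<in> G \<and> \<not> (2::int)^(Suc eps) dvd E tt" unfolding tt_def by (metis (mono_tags, lifting) someI_ex)
  thus "tt \<in> G" "\<not> (2::int)^(Suc eps) dvd E tt" by auto
qed

definition uu where "uu = E tt div 2^eps"

lemma uu: "E tt = 2^eps * uu" "odd uu"
proof -
  have d: "(2::int)^eps dvd E tt" using eps_dvd[OF tt(1)] .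
  thus e1: "E tt = 2^eps * uu" unfolding uu_def by simp
  show "odd uu"
  proof
    assume "even uu"
    then obtain w where "uu = 2*w" by blast
    hence "E tt = 2^(Suc eps) * w" using e1 by simp
    thus False using tt(2) by simp
  qed
qed

definition XD where "XD = {h \<in> carrier HH. aa h = 1 \<and> (2::int)^eps dvd bb h}"

lemma X_sub: "subgroup XD HH"
proof (rule H.subgroupI)
  show "XD \<subseteq> carrier HH" unfolding XD_def by blast
  have "\<one>\<^bsub>HH\<^esub> \<in> XD" unfolding XD_def using aa_one bb_one by simp
  thus "XD \<noteq> {}" by blast
next
  fix h assume h: "h \<in> XD"
  hence hc: "h \<in> carrier HH" and a: "aa h = 1" and b: "2^eps dvd bb h" unfolding XD_def by auto
  have ic: "inv\<^bsub>HH\<^esub> h \<in> carrier HH" using hc by simp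
  have ci: "aa (inv\<^bsub>HH\<^esub> h) mod n = 1" "(bb h + bb (inv\<^bsub>HH\<^esub> h)) mod n = 0"
    using coord_inv[OF hc] a by auto
  have "aa (inv\<^bsub>HH\<^esub> h) = 1" using ci(1) aa_range[OF ic] by simp
  moreover have "(2::int)^eps dvd bb h + bb (inv\<^bsub>HH\<^esub> h)"
  proof -
    have "n dvd bb h + bb (inv\<^bsub>HH\<^esub> h)" using ci(2) by (simp add: dvd_eq_mod_eq_0)
    moreover have "(2::int)^eps dvd n" using pow2_dvd_n[of eps] eps_lt by simp
    ultimately show ?thesis by (rule dvd_trans[rotated])
  qed
  hence "(2::int)^eps dvd bb (inv\<^bsub>HH\<^esub> h)" using b by (simp add: dvd_add_right_iff)
  ultimately show "inv\<^bsub>HH\<^esub> h \<in> XD" unfolding XD_def using ic by blast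
next
  fix h k assume h: "h \<in> XD" and k: "k \<in> XD"
  hence hc: "h \<in> carrier HH" "aa h = 1" "2^eps dvd bb h" and kc: "k \<in> carrier HH" "aa k = 1" "2^eps dvd bb k"
    unfolding XD_def by auto
  have "aa (h \<otimes>\<^bsub>HH\<^esub> k) = 1" using aa_mult[OF hc(1) kc(1)] hc kc one_mod by simp
  moreover have "(2::int)^eps dvd bb (h \<otimes>\<^bsub>HH\<^esub> k)"
  proof -
    have "(2::int)^eps dvd bb h + bb k" using hc kc by simp
    moreover have "(2::int)^eps dvd n" using pow2_dvd_n[of eps] eps_lt by simp
    ultimately have "(2::int)^eps dvd (bb h + bb k) mod n" by (simp add: dvd_mod)
    thus ?thesis using bb_mult[OF hc(1) kc(1)] hc kc by simp
  qed
  ultimately show "h \<otimes>\<^bsub>HH\<^esub> k \<in> XD" unfolding XD_def using hc kc by simp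
qed

lemma dset_X: "derived_set HH G \<subseteq> XD"
proof
  fix z assume "z \<in> derived_set HH G"
  then obtain x y where xy: "x \<in> G" "y \<in> G"
    and z: "z = x \<otimes>\<^bsub>HH\<^esub> y \<otimes>\<^bsub>HH\<^esub> inv\<^bsub>HH\<^esub> x \<otimes>\<^bsub>HH\<^esub> inv\<^bsub>HH\<^esub> y"
    by (elim UN_E singletonE)
  have xc: "x \<in> carrier HH" and yc: "y \<in> carrier HH" using xy G_carr by auto
  have zc: "z \<in> carrier HH" using z xc yc by simp
  have cc: "aa z = 1 \<and> bb z = (bb x * E y - bb y * E x) mod n" unfolding z by (rule comm_coords[OF xc yc])
  have "(2::int)^eps dvd bb x * E y - bb y * E x" using eps_dvd[OF xy(1)] eps_dvd[OF xy(2)] by simp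
  moreover have "(2::int)^eps dvd n" using pow2_dvd_n[of eps] eps_lt by simp
  ultimately have "(2::int)^eps dvd bb z" using cc by (simp add: dvd_mod)
  thus "z \<in> XD" unfolding XD_def using zc cc by simp
qed

lemma derived_X: "derived HH G \<subseteq> XD"
  unfolding derived_def by (rule H.generate_subgroup_incl[OF dset_X X_sub])

definition cs where "cs = g1 \<otimes>\<^bsub>HH\<^esub> tt \<otimes>\<^bsub>HH\<^esub> inv\<^bsub>HH\<^esub> g1 \<otimes>\<^bsub>HH\<^esub> inv\<^bsub>HH\<^esub> tt"

lemma cs: "cs \<in> derived HH G" "aa cs = 1" "bb cs = E tt" "cs \<in> carrier HH"
proof -
  have g1c: "g1 \<in> carrier HH" and ttc: "tt \<in> carrier HH" using g1 tt G_carr by auto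
  show "cs \<in> derived HH G" unfolding derived_def cs_def
    by (rule generate.incl) (use g1 tt(1) in blast)
  have "aa cs = 1 \<and> bb cs = (bb g1 * E tt - bb tt * E g1) mod n"
    unfolding cs_def by (rule comm_coords[OF g1c ttc])
  thus "aa cs = 1" "bb cs = E tt" using g1 E_g1 E_range[of tt] by auto
  show "cs \<in> carrier HH" unfolding cs_def using g1c ttc by simp
qed

lemma derived_sub: "subgroup (derived HH G) HH"
  unfolding derived_def by (rule H.generate_is_subgroup) (use G_sub in blast)

lemma X_in_derived:
  assumes x: "0 \<le> x" "x < n" "(2::int)^eps dvd x"
  shows "\<exists>h\<in>derived HH G. bb h = x"
proof -
  obtain x' where x': "x = 2^eps * x'" using x(3) by blast
  have "coprime uu n" using uu(2) by simp
  hence "gcd uu n = 1" by simp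
  then obtain p q where pq: "p * uu + q * n = 1" using bezout_int[of uu n] by auto
  define K where "K = (x' * p) mod n"
  have K0: "0 \<le> K" unfolding K_def by simp
  have Kr: "K = x'*p - n*((x'*p) div n)" unfolding K_def by (rule modrep)
  have dv: "n dvd (E tt * K - x)" by (rule help5[OF uu(1) x' pq Kr])
  define h where "h = cs [^]\<^bsub>HH\<^esub> (nat K)"
  have hd: "h \<in> derived HH G" unfolding h_def by (rule subgroup_pow_closed[OF derived_sub cs(1)])
  have "bb h = (bb cs * (\<Sum>i<nat K. aa cs ^ i)) mod n" unfolding h_def using coord_pow[OF cs(4)] by blast
  also have "\<dots> = (E tt * K) mod n" using cs K0 by simp
  also have "\<dots> = x mod n" using dv by (simp add: mod_eq_dvd_iff)
  also have "\<dots> = x" using x by simp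
  finally show ?thesis using hd by blast
qed

lemma X_eq: "derived HH G = XD"
proof
  show "derived HH G \<subseteq> XD" by (rule derived_X)
  show "XD \<subseteq> derived HH G"
  proof
    fix z assume z: "z \<in> XD"
    hence zc: "z \<in> carrier HH" and za: "aa z = 1" and zb: "(2::int)^eps dvd bb z" unfolding XD_def by auto
    have "\<exists>h\<in>derived HH G. bb h = bb z"
      using bb_range[OF zc] zb by (intro X_in_derived) auto
    then obtain h where h: "h \<in> derived HH G" "bb h = bb z" by (elim bexE)
    have "h \<in> XD" using h(1) derived_X by blast
    hence "h \<in> carrier HH" "aa h = 1" unfolding XD_def by auto
    hence "h = z" using coord_inj[OF _ zc h(2)] za by simp
    thus "z \<in> derived HH G" using h(1) by simp
  qed
qed

lemma card_derived: "card (derived HH G) = 2^(e - eps)"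
proof -
  have inj: "inj_on bb XD"
  proof (rule inj_onI)
    fix x y assume "x \<in> XD" "y \<in> XD" "bb x = bb y"
    thus "x = y" using coord_inj unfolding XD_def by auto
  qed
  have img: "bb ` XD = {x::int. 0 \<le> x \<and> x < 2^e \<and> 2^eps dvd x}"
  proof
    show "bb ` XD \<subseteq> {x::int. 0 \<le> x \<and> x < 2^e \<and> 2^eps dvd x}"
      unfolding XD_def using bb_range by auto
    show "{x::int. 0 \<le> x \<and> x < 2^e \<and> 2^eps dvd x} \<subseteq> bb ` XD"
    proof
      fix x assume "x \<in> {x::int. 0 \<le> x \<and> x < 2^e \<and> 2^eps dvd x}"
      hence "\<exists>h\<in>derived HH G. bb h = x" by (intro X_in_derived) auto
      then obtain h where "h \<in> derived HH G" "bb h = x" by (elim bexE)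
      thus "x \<in> bb ` XD" unfolding X_eq by (intro image_eqI) auto
    qed
  qed
  have "card (derived HH G) = card (bb ` XD)" using X_eq card_image[OF inj] by simp
  also have "\<dots> = 2^(e - eps)" unfolding img using card_mult_pow2 eps_lt by simp
  finally show ?thesis .
qed


lemma E_zero_aa: "z \<in> carrier HH \<Longrightarrow> E z = 0 \<Longrightarrow> aa z = (1 + lam * bb z) mod n"
proof -
  assume zc: "z \<in> carrier HH" and ez: "E z = 0"
  hence "n dvd 1 - aa z + lam * bb z" unfolding E_def by (simp add: dvd_eq_mod_eq_0)
  moreover have "aa z - (1 + lam * bb z) = - (1 - aa z + lam * bb z)" by simp
  ultimately have "n dvd aa z - (1 + lam * bb z)" by (simp only: dvd_minus_iff)
  thus ?thesis using aa_range[OF zc] by (intro mod_unique) auto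
qed

lemma E_zero_inj:
  assumes x: "x \<in> carrier HH" and y: "y \<in> carrier HH" and ex: "E x = 0" and ey: "E y = 0" and b: "bb x = bb y"
  shows "x = y"
proof -
  have "aa x = aa y" using E_zero_aa[OF x ex] E_zero_aa[OF y ey] b by simp
  thus ?thesis using coord_inj[OF x y b] by simp
qed

definition Zc where "Zc = {z \<in> G. E z = 0 \<and> (2::int)^(e - eps) dvd bb z}"

lemma n_split: "n = 2^eps * 2^(e - eps)"
  using eps_lt by (simp add: power_add[symmetric])

lemma center_eq: "group_center (HH\<lparr>carrier := G\<rparr>) = Zc"
proof (rule Set.set_eqI, rule iffI)
  fix z assume "z \<in> group_center (HH\<lparr>carrier := G\<rparr>)"
  hence zG: "z \<in> G" and comm: "\<And>h. h \<in> G \<Longrightarrow> z \<otimes>\<^bsub>HH\<^esub> h = h \<otimes>\<^bsub>HH\<^esub> z"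
    unfolding group_center_def by auto
  have zc: "z \<in> carrier HH" using G_carr[OF zG] .
  have g1c: "g1 \<in> carrier HH" using G_carr g1 by blast
  have "(bb z * E g1 - bb g1 * E z) mod n = 0" using comm[of g1] g1 comm_iff[OF zc g1c] by simp
  hence "(- E z) mod n = 0" using E_g1 g1 by simp
  hence "n dvd - E z" by (simp only: dvd_eq_mod_eq_0)
  hence "n dvd E z" by (simp only: dvd_minus_iff)
  hence Ez: "E z = 0" using E_range[of z] by (intro help4[of n]) auto
  have ttc: "tt \<in> carrier HH" using G_carr tt(1) by blast
  have "(bb z * E tt - bb tt * E z) mod n = 0" using comm[OF tt(1)] comm_iff[OF zc ttc] by simp
  hence "n dvd bb z * E tt" using Ez by (simp add: dvd_eq_mod_eq_0)
  hence "2^eps * 2^(e - eps) dvd 2^eps * (bb z * uu)" using uu(1) n_split by (simp add: ac_simps)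
  moreover have nz: "(2::int)^eps \<noteq> 0" by simp
  ultimately have "(2::int)^(e - eps) dvd bb z * uu" by (simp only: dvd_mult_cancel_left nz simp_thms)
  moreover have "coprime ((2::int)^(e - eps)) uu" using uu(2) by simp
  ultimately have "(2::int)^(e - eps) dvd bb z" using coprime_dvd_mult_left_iff by blast
  thus "z \<in> Zc" unfolding Zc_def using zG Ez by simp
next
  fix z assume "z \<in> Zc"
  hence zG: "z \<in> G" and Ez: "E z = 0" and bz: "(2::int)^(e - eps) dvd bb z" unfolding Zc_def by auto
  have zc: "z \<in> carrier HH" using G_carr[OF zG] .
  have "\<forall>h\<in>G. z \<otimes>\<^bsub>HH\<^esub> h = h \<otimes>\<^bsub>HH\<^esub> z"
  proof
    fix h assume hG: "h \<in> G"
    have hc: "h \<in> carrier HH" using G_carr[OF hG] .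
    have "2^(e - eps) * 2^eps dvd bb z * E h" using bz eps_dvd[OF hG] by (rule mult_dvd_mono)
    hence "n dvd bb z * E h" using n_split by (simp add: ac_simps)
    hence "(bb z * E h - bb h * E z) mod n = 0" using Ez by (simp add: dvd_eq_mod_eq_0)
    thus "z \<otimes>\<^bsub>HH\<^esub> h = h \<otimes>\<^bsub>HH\<^esub> z" using comm_iff[OF zc hc] by simp
  qed
  thus "z \<in> group_center (HH\<lparr>carrier := G\<rparr>)" unfolding group_center_def using zG by simp
qed


lemma fin_HH: "finite (carrier HH)"
proof (rule inj_on_finite[of "\<lambda>h. (bb h, aa h)" _ "{0..<n} \<times> {0..<n}"])
  show "inj_on (\<lambda>h. (bb h, aa h)) (carrier HH)"
    by (rule inj_onI) (use coord_inj in auto)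
  show "(\<lambda>h. (bb h, aa h)) ` carrier HH \<subseteq> {0..<n} \<times> {0..<n}"
    using bb_range aa_range by auto
  show "finite ({0..<n} \<times> {0..<n})" by simp
qed

lemma fin_sub: "A \<subseteq> carrier HH \<Longrightarrow> finite A"
  using fin_HH finite_subset by blast

definition Ge where "Ge = {h \<in> G. even (bb h)}"
definition Hp where "Hp = {h \<in> G. even (bb h) \<and> E h = 0}"

lemma Ge_sub: "Ge \<subseteq> carrier HH" unfolding Ge_def using G_sub by blast
lemma Hp_sub: "Hp \<subseteq> carrier HH" unfolding Hp_def using G_sub by blast

lemma n_even: "even n" using e_pos by simp

lemma card_Ge: "2^e \<le> card Ge"
proof -
  obtain \<delta> where d: "\<delta> \<in> G" "bb \<delta> = 0" "aa \<delta> \<noteq> 1" by (rule delta)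
  have dc: "\<delta> \<in> carrier HH" using G_carr[OF d(1)] .
  define Ev where "Ev = {x::int. 0 \<le> x \<and> x < 2^e \<and> 2^1 dvd x}"
  have cEv: "card Ev = 2^(e-1)" unfolding Ev_def by (rule card_mult_pow2) (use e_pos in simp)
  define rep where "rep b = (SOME h. h \<in> G \<and> bb h = b)" for b
  have rep: "rep b \<in> G \<and> bb (rep b) = b" if "b \<in> Ev" for b
  proof -
    have "\<exists>h\<in>G. bb h = b" using that unfolding Ev_def by (intro trans) auto
    thus ?thesis unfolding rep_def by (metis (mono_tags, lifting) someI_ex)
  qed
  define f where "f p = (if snd p then rep (fst p) \<otimes>\<^bsub>HH\<^esub> \<delta> else rep (fst p))" for p
  have key: "bb (rep b \<otimes>\<^bsub>HH\<^esub> \<delta>) = b \<and> aa (rep b \<otimes>\<^bsub>HH\<^esub> \<delta>) \<noteq> aa (rep b) \<and> rep b \<otimes>\<^bsub>HH\<^esub> \<delta> \<in> G"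
    if b: "b \<in> Ev" for b
  proof -
    have rc: "rep b \<in> carrier HH" using rep[OF b] G_carr by blast
    have br: "0 \<le> b" "b < n" using b unfolding Ev_def by auto
    have "bb (rep b \<otimes>\<^bsub>HH\<^esub> \<delta>) = b mod n" using bb_mult[OF rc dc] rep[OF b] d(2) by simp
    also have "\<dots> = b" using br by simp
    finally have B: "bb (rep b \<otimes>\<^bsub>HH\<^esub> \<delta>) = b" .
    have A: "aa (rep b \<otimes>\<^bsub>HH\<^esub> \<delta>) \<noteq> aa (rep b)"
    proof
      assume "aa (rep b \<otimes>\<^bsub>HH\<^esub> \<delta>) = aa (rep b)"
      hence "(aa (rep b) * aa \<delta>) mod n = aa (rep b) mod n" using aa_mult[OF rc dc] aa_range[OF rc] by simp
      hence "n dvd aa (rep b) * aa \<delta> - aa (rep b)" by (simp only: mod_eq_dvd_iff)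
      hence "n dvd aa (rep b) * (aa \<delta> - 1)" by (simp add: algebra_simps)
      moreover have "coprime n (aa (rep b))" using aa_odd[OF rc] by simp
      ultimately have "n dvd aa \<delta> - 1" using coprime_dvd_mult_right_iff by blast
      hence "aa \<delta> - 1 = 0" using aa_range[OF dc] n_ge4 by (intro help4[of n]) auto
      thus False using d(3) by simp
    qed
    show ?thesis using A B G_mult[OF _ d(1)] rep[OF b] by blast
  qed
  have inj: "inj_on f (Ev \<times> UNIV)"
  proof (rule inj_onI)
    fix p q assume p: "p \<in> Ev \<times> UNIV" and q: "q \<in> Ev \<times> UNIV" and fpq: "f p = f q"
    have bp: "bb (f p) = fst p" using p key rep unfolding f_def by auto
    have bq: "bb (f q) = fst q" using q key rep unfolding f_def by auto
    have fst: "fst p = fst q" using bp bq fpq by simp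
    have "snd p = snd q"
    proof (rule ccontr)
      assume ne: "snd p \<noteq> snd q"
      have fe: "fst p \<in> Ev" using p by auto
      show False
      proof (cases "snd p")
        case True
        hence "snd q = False" using ne by simp
        hence "rep (fst p) \<otimes>\<^bsub>HH\<^esub> \<delta> = rep (fst p)" using fpq True fst unfolding f_def by simp
        thus False using key[OF fe] by simp
      next
        case False
        hence "snd q = True" using ne by simp
        hence "rep (fst p) = rep (fst p) \<otimes>\<^bsub>HH\<^esub> \<delta>" using fpq False fst unfolding f_def by simp
        thus False using key[OF fe] by simp
      qed
    qed
    thus "p = q" using fst by (simp add: prod_eq_iff)
  qed
  have img: "f ` (Ev \<times> UNIV) \<subseteq> Ge"
  proof
    fix y assume "y \<in> f ` (Ev \<times> UNIV)"
    then obtain p where p: "p \<in> Ev \<times> UNIV" "y = f p" by blast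
    have fe: "fst p \<in> Ev" using p by auto
    have ev: "even (fst p)" using fe unfolding Ev_def by simp
    show "y \<in> Ge"
    proof (cases "snd p")
      case True
      thus ?thesis using p key[OF fe] ev unfolding f_def Ge_def by simp
    next
      case False
      thus ?thesis using p rep[OF fe] ev unfolding f_def Ge_def by simp
    qed
  qed
  have "card (Ev \<times> (UNIV :: bool set)) \<le> card Ge"
    by (rule card_inj_on_le[OF inj img fin_sub[OF Ge_sub]])
  moreover have "card (Ev \<times> (UNIV :: bool set)) = 2^e"
  proof -
    have "card (Ev \<times> (UNIV :: bool set)) = 2^(e-1) * 2" using cEv by (simp add: card_cartesian_product)
    also have "\<dots> = 2^e" using e_pos by (simp add: power_eq_if)
    finally show ?thesis .
  qed
  ultimately show ?thesis by simp
qed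


lemma inv_even: assumes kc: "k \<in> carrier HH" and ek: "even (bb k)" shows "even (bb (inv\<^bsub>HH\<^esub> k))"
proof -
  have "(bb k + aa k * bb (inv\<^bsub>HH\<^esub> k)) mod n = 0" using coord_inv[OF kc] by simp
  hence "n dvd bb k + aa k * bb (inv\<^bsub>HH\<^esub> k)" by (simp only: dvd_eq_mod_eq_0)
  hence "even (bb k + aa k * bb (inv\<^bsub>HH\<^esub> k))" using n_even dvd_trans by blast
  hence "even (aa k * bb (inv\<^bsub>HH\<^esub> k))" using ek by simp
  thus ?thesis using aa_odd[OF kc] by simp
qed

lemma even_modn: "even x \<Longrightarrow> even (x mod n)"
  using dvd_mod n_even by blast

lemma Ge_quot:
  assumes k: "k \<in> Ge" and h: "h \<in> Ge" and E: "E k = E h"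
  shows "inv\<^bsub>HH\<^esub> k \<otimes>\<^bsub>HH\<^esub> h \<in> Hp"
proof -
  have kG: "k \<in> G" and hG: "h \<in> G" and ek: "even (bb k)" and eh: "even (bb h)" using k h unfolding Ge_def by auto
  have kc: "k \<in> carrier HH" and hc: "h \<in> carrier HH" using kG hG G_carr by auto
  define m where "m = inv\<^bsub>HH\<^esub> k \<otimes>\<^bsub>HH\<^esub> h"
  have ic: "inv\<^bsub>HH\<^esub> k \<in> carrier HH" using kc by simp
  have mc: "m \<in> carrier HH" unfolding m_def using kc hc by simp
  have mG: "m \<in> G" unfolding m_def using G_mult[OF G_inv[OF kG] hG] .
  have "bb m = (bb (inv\<^bsub>HH\<^esub> k) + aa (inv\<^bsub>HH\<^esub> k) * bb h) mod n" unfolding m_def by (rule bb_mult[OF ic hc])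
  moreover have "even (bb (inv\<^bsub>HH\<^esub> k) + aa (inv\<^bsub>HH\<^esub> k) * bb h)" using inv_even[OF kc ek] eh by simp
  ultimately have em: "even (bb m)" using even_modn by simp
  have km: "k \<otimes>\<^bsub>HH\<^esub> m = h" unfolding m_def using kc hc ic by (simp add: H.m_assoc[symmetric])
  have "E h = (E k + aa k * E m) mod n" using E_mult[OF kc mc] km by simp
  hence "(E k + aa k * E m) mod n = E k mod n" using E E_range[of k] by simp
  hence "n dvd (E k + aa k * E m) - E k" by (simp only: mod_eq_dvd_iff)
  hence "n dvd aa k * E m" by simp
  moreover have "coprime n (aa k)" using aa_odd[OF kc] by simp
  ultimately have "n dvd E m" using coprime_dvd_mult_right_iff by blast
  hence "E m = 0" using E_range[of m] by (intro help4[of n]) auto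
  thus ?thesis unfolding Hp_def using mG em m_def by simp
qed

lemma card_Ge_le: "card Ge \<le> card Hp * 2^(e - eps)"
proof -
  define Ie where "Ie = {x::int. 0 \<le> x \<and> x < 2^e \<and> 2^eps dvd x}"
  have cIe: "card Ie = 2^(e - eps)" unfolding Ie_def by (rule card_mult_pow2) (use eps_lt in simp)
  define r where "r x = (SOME k. k \<in> Ge \<and> E k = x)" for x
  have r: "r (E h) \<in> Ge \<and> E (r (E h)) = E h" if "h \<in> Ge" for h
    unfolding r_def by (rule someI[of _ h]) (use that in simp)
  define psi where "psi h = (inv\<^bsub>HH\<^esub> (r (E h)) \<otimes>\<^bsub>HH\<^esub> h, E h)" for h
  have inj: "inj_on psi Ge"
  proof (rule inj_onI)
    fix x y assume x: "x \<in> Ge" and y: "y \<in> Ge" and p: "psi x = psi y"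
    have Exy: "E x = E y" using p unfolding psi_def by simp
    have rc: "r (E x) \<in> carrier HH" using r[OF x] Ge_sub by blast
    have xc: "x \<in> carrier HH" and yc: "y \<in> carrier HH" using x y Ge_sub by auto
    have "inv\<^bsub>HH\<^esub> (r (E x)) \<otimes>\<^bsub>HH\<^esub> x = inv\<^bsub>HH\<^esub> (r (E x)) \<otimes>\<^bsub>HH\<^esub> y"
      using p Exy unfolding psi_def by simp
    thus "x = y" using H.l_cancel[of "inv\<^bsub>HH\<^esub> (r (E x))" x y] rc xc yc by simp
  qed
  have img: "psi ` Ge \<subseteq> Hp \<times> Ie"
  proof
    fix z assume "z \<in> psi ` Ge"
    then obtain h where h: "h \<in> Ge" "z = psi h" by blast
    have hG: "h \<in> G" using h(1) unfolding Ge_def by simp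
    have "inv\<^bsub>HH\<^esub> (r (E h)) \<otimes>\<^bsub>HH\<^esub> h \<in> Hp"
      using r[OF h(1)] h(1) by (intro Ge_quot) auto
    moreover have "E h \<in> Ie" unfolding Ie_def using E_range[of h] eps_dvd[OF hG] by simp
    ultimately show "z \<in> Hp \<times> Ie" using h(2) unfolding psi_def by simp
  qed
  have "finite Ie" by (rule finite_subset[of _ "{0..<n}"]) (auto simp: Ie_def)
  hence fin: "finite (Hp \<times> Ie)" using fin_sub[OF Hp_sub] by simp
  have "card Ge \<le> card (Hp \<times> Ie)" by (rule card_inj_on_le[OF inj img fin])
  also have "\<dots> = card Hp * 2^(e - eps)" using cIe by (simp add: card_cartesian_product)
  finally show ?thesis .
qed

lemma card_Hp: "2^eps \<le> card Hp"
proof -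
  have "2^eps * 2^(e - eps) \<le> card Hp * 2^(e - eps)"
    using card_Ge card_Ge_le eps_lt by (simp add: power_add[symmetric])
  thus ?thesis by simp
qed


lemma Hp_mult: "x \<in> Hp \<Longrightarrow> y \<in> Hp \<Longrightarrow> x \<otimes>\<^bsub>HH\<^esub> y \<in> Hp"
proof -
  assume x: "x \<in> Hp" and y: "y \<in> Hp"
  have xG: "x \<in> G" "even (bb x)" "E x = 0" and yG: "y \<in> G" "even (bb y)" "E y = 0" using x y unfolding Hp_def by auto
  have xc: "x \<in> carrier HH" and yc: "y \<in> carrier HH" using xG(1) yG(1) G_carr by auto
  have "even (bb x + aa x * bb y)" using xG(2) yG(2) by simp
  hence "even (bb (x \<otimes>\<^bsub>HH\<^esub> y))" using bb_mult[OF xc yc] even_modn by simp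
  moreover have "E (x \<otimes>\<^bsub>HH\<^esub> y) = 0" using E_mult[OF xc yc] xG(3) yG(3) by simp
  ultimately show ?thesis unfolding Hp_def using G_mult[OF xG(1) yG(1)] by simp
qed

lemma Hp_one: "\<one>\<^bsub>HH\<^esub> \<in> Hp"
  unfolding Hp_def using G_one bb_one E_one by simp

lemma Hp_pow: "x \<in> Hp \<Longrightarrow> x [^]\<^bsub>HH\<^esub> (k::nat) \<in> Hp"
proof (induction k)
  case 0 then show ?case using Hp_one by simp
next
  case (Suc k) then show ?case unfolding Group.nat_pow_Suc by (intro Hp_mult)
qed

lemma exists_h0:
  assumes "0 < eps"
  shows "\<exists>h0\<in>Hp. \<not> (2::int)^(e - eps + 1) dvd bb h0"
proof (rule ccontr)
  assume "\<not> ?thesis"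
  hence all: "\<And>h. h \<in> Hp \<Longrightarrow> (2::int)^(e - eps + 1) dvd bb h" by blast
  define T where "T = {x::int. 0 \<le> x \<and> x < 2^e \<and> 2^(e - eps + 1) dvd x}"
  have cT: "card T = 2^(e - (e - eps + 1))" unfolding T_def by (rule card_mult_pow2) (use assms eps_lt in simp)
  have inj: "inj_on bb Hp"
  proof (rule inj_onI)
    fix x y assume "x \<in> Hp" "y \<in> Hp" "bb x = bb y"
    thus "x = y" using E_zero_inj Hp_sub unfolding Hp_def by blast
  qed
  have sub: "bb ` Hp \<subseteq> T" unfolding T_def using all bb_range Hp_sub by blast
  have "finite T" by (rule finite_subset[of _ "{0..<n}"]) (auto simp: T_def)
  hence "card (bb ` Hp) \<le> card T" using sub card_mono by blast
  moreover have "e - (e - eps + 1) = eps - 1" using assms eps_lt by simp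
  ultimately have "card Hp \<le> 2^(eps - 1)" using card_image[OF inj] cT by simp
  moreover have "(2::nat)^(eps - 1) < 2^eps" using assms by simp
  ultimately show False using card_Hp by linarith
qed

lemma four_dvd_n: "(4::int) dvd n"
  using pow2_dvd_n[of 2] e2 by simp


lemma central_exists:
  assumes b: "0 \<le> b" "b < n" "(2::int)^(e - eps) dvd b"
  shows "\<exists>z\<in>G. E z = 0 \<and> bb z = b"
proof (cases "eps = 0")
  case True
  hence "n dvd b" using b(3) by simp
  hence "b = 0" using b n_ge4 by (intro help4[of n]) auto
  thus ?thesis using G_one E_one bb_one by blast
next
  case False
  hence ep: "0 < eps" by simp
  obtain h0 where h0: "h0 \<in> Hp" "\<not> (2::int)^(e - eps + 1) dvd bb h0" using exists_h0[OF ep] by blast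
  have h0G: "h0 \<in> G" and h0e: "even (bb h0)" and h0E: "E h0 = 0" using h0(1) unfolding Hp_def by auto
  have h0c: "h0 \<in> carrier HH" using G_carr[OF h0G] .
  define b0 where "b0 = bb h0"
  have "b0 \<noteq> 0" using h0(2) unfolding b0_def by auto
  then obtain v u0 where vu: "b0 = 2^v * u0" "odd u0" using val_exists by blast
  have vle: "v \<le> e - eps"
  proof (rule ccontr)
    assume "\<not> v \<le> e - eps"
    hence "e - eps + 1 \<le> v" by simp
    hence "(2::int)^(e - eps + 1) dvd 2^v" by (rule le_imp_power_dvd)
    hence "(2::int)^(e - eps + 1) dvd b0" using vu(1) by simp
    thus False using h0(2) unfolding b0_def by simp
  qed
  hence vlt: "v \<le> e" by simp
  define \<mu> where "\<mu> = aa h0"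
  have mu_eq: "\<mu> = (1 + lam * b0) mod n" unfolding \<mu>_def b0_def by (rule E_zero_aa[OF h0c h0E])
  have "(2::int) * 2 dvd lam * b0" using lam_even h0e unfolding b0_def by (intro mult_dvd_mono)
  hence "(4::int) dvd lam * b0" by simp
  then obtain c where c: "lam * b0 = 4 * c" by blast
  have mu4: "\<mu> mod 4 = 1"
  proof -
    have "\<mu> mod 4 = (1 + lam * b0) mod 4" unfolding mu_eq using four_dvd_n by (rule mod_mod_cancel)
    also have "\<dots> = 1" unfolding c by simp
    finally show ?thesis .
  qed
  have muodd: "odd \<mu>" using mu4 by presburger
  define f where "f k = bb (h0 [^]\<^bsub>HH\<^esub> (k::nat))" for k
  have f_eq: "f k = (b0 * (\<Sum>i<k. \<mu>^i)) mod n" for k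
    unfolding f_def b0_def \<mu>_def using coord_pow[OF h0c, of k] by simp
  define Tv where "Tv = {x::int. 0 \<le> x \<and> x < 2^e \<and> 2^v dvd x}"
  have cTv: "card Tv = 2^(e - v)" unfolding Tv_def by (rule card_mult_pow2[OF vlt])
  have finTv: "finite Tv" by (rule finite_subset[of _ "{0..<n}"]) (auto simp: Tv_def)
  have vn: "(2::int)^v dvd n" using pow2_dvd_n[OF vlt] .
  have n_v: "n = 2^v * 2^(e - v)" using vlt by (simp add: power_add[symmetric])
  have fsub: "f ` {0..<2^(e - v)} \<subseteq> Tv"
  proof
    fix x assume "x \<in> f ` {0..<2^(e - v)}"
    then obtain k where x: "x = f k" by blast
    have "(2::int)^v dvd b0 * (\<Sum>i<k. \<mu>^i)" using vu(1) by simp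
    hence "(2::int)^v dvd x" unfolding x f_eq using vn by (simp add: dvd_mod)
    thus "x \<in> Tv" unfolding Tv_def x f_eq by simp
  qed
  have finj: "inj_on f {0..<2^(e - v)}"
  proof -
    have noeq: "f k \<noteq> f k'" if kk: "k < k'" "k' < 2^(e - v)" for k k'
    proof
      assume fe: "f k = f k'"
      define d where "d = k' - k"
      have k': "k' = k + d" and d0: "0 < d" and dlt: "d < 2^(e - v)" using kk unfolding d_def by auto
      have S: "(\<Sum>i<k'. \<mu>^i) = (\<Sum>i<k. \<mu>^i) + \<mu>^k * (\<Sum>i<d. \<mu>^i)" unfolding k' by (rule geo_split)
      have "(b0 * (\<Sum>i<k. \<mu>^i)) mod n = (b0 * (\<Sum>i<k'. \<mu>^i)) mod n" using fe f_eq by simp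
      hence "n dvd b0 * (\<Sum>i<k'. \<mu>^i) - b0 * (\<Sum>i<k. \<mu>^i)" by (simp only: mod_eq_dvd_iff dvd_diff_commute)
      hence "n dvd b0 * (\<mu>^k * (\<Sum>i<d. \<mu>^i))" unfolding S by (simp add: algebra_simps)
      hence "2^v * 2^(e - v) dvd 2^v * ((u0 * \<mu>^k) * (\<Sum>i<d. \<mu>^i))" unfolding n_v vu(1) by (simp add: ac_simps)
      hence "(2::int)^(e - v) dvd (u0 * \<mu>^k) * (\<Sum>i<d. \<mu>^i)" by (simp only: dvd_mult_cancel_left power_not_zero simp_thms)
      moreover have "coprime ((2::int)^(e - v)) (u0 * \<mu>^k)" using vu(2) muodd by simp
      ultimately have "(2::int)^(e - v) dvd (\<Sum>i<d. \<mu>^i)" using coprime_dvd_mult_right_iff by blast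
      hence "(2::int)^(e - v) dvd int d" using geo_val[OF mu4] by blast
      hence "(2::int)^(e - v) \<le> int d" using d0 by (intro zdvd_imp_le) auto
      moreover have "int d < 2^(e - v)" using dlt by (metis of_nat_less_numeral_power_cancel_iff of_nat_numeral)
      ultimately show False by simp
    qed
    show ?thesis
    proof (rule inj_onI, rule ccontr)
      fix k k' assume k: "k \<in> {0..<2^(e - v)}" and k': "k' \<in> {0..<2^(e - v)}" and fe: "f k = f k'" and ne: "k \<noteq> k'"
      show False
      proof (cases "k < k'")
        case True thus False using noeq[OF True] k' fe by simp
      next
        case False hence "k' < k" using ne by simp
        thus False using noeq k fe by fastforce
      qed
    qed
  qed
  have "card (f ` {0..<2^(e - v)}) = 2^(e - v)" using card_image[OF finj] by simp
  hence feq: "f ` {0..<2^(e - v)} = Tv" using card_subset_eq[OF finTv fsub] cTv by simp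
  have "(2::int)^v dvd 2^(e - eps)" using vle by (rule le_imp_power_dvd)
  hence "(2::int)^v dvd b" using b(3) by (rule dvd_trans)
  hence "b \<in> Tv" unfolding Tv_def using b by simp
  then obtain k where k: "b = f k" unfolding feq[symmetric] by blast
  have "h0 [^]\<^bsub>HH\<^esub> k \<in> Hp" using Hp_pow[OF h0(1)] .
  hence "h0 [^]\<^bsub>HH\<^esub> k \<in> G \<and> E (h0 [^]\<^bsub>HH\<^esub> k) = 0" unfolding Hp_def by simp
  thus ?thesis using k unfolding f_def by blast
qed


lemma card_center: "card (group_center (HH\<lparr>carrier := G\<rparr>)) = 2^eps"
proof -
  have inj: "inj_on bb Zc"
  proof (rule inj_onI)
    fix x y assume "x \<in> Zc" "y \<in> Zc" "bb x = bb y"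
    thus "x = y" using E_zero_inj G_carr unfolding Zc_def by blast
  qed
  have img: "bb ` Zc = {x::int. 0 \<le> x \<and> x < 2^e \<and> 2^(e - eps) dvd x}"
  proof
    show "bb ` Zc \<subseteq> {x::int. 0 \<le> x \<and> x < 2^e \<and> 2^(e - eps) dvd x}"
      unfolding Zc_def using bb_range G_carr by auto
    show "{x::int. 0 \<le> x \<and> x < 2^e \<and> 2^(e - eps) dvd x} \<subseteq> bb ` Zc"
    proof
      fix x assume "x \<in> {x::int. 0 \<le> x \<and> x < 2^e \<and> 2^(e - eps) dvd x}"
      hence "\<exists>z\<in>G. E z = 0 \<and> bb z = x" by (intro central_exists) auto
      then obtain z where "z \<in> G" "E z = 0" "bb z = x" by blast
      thus "x \<in> bb ` Zc" using \<open>x \<in> _\<close> unfolding Zc_def by (intro image_eqI[of _ _ z]) auto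
    qed
  qed
  have "card (group_center (HH\<lparr>carrier := G\<rparr>)) = card (bb ` Zc)" using center_eq card_image[OF inj] by simp
  also have "\<dots> = 2^(e - (e - eps))" unfolding img by (rule card_mult_pow2) simp
  also have "\<dots> = 2^eps" using eps_lt by simp
  finally show ?thesis .
qed

lemma main_result: "card (group_center (HH\<lparr>carrier := G\<rparr>)) * card (derived HH G) = 2^e"
  using card_center card_derived eps_lt by (simp add: power_add[symmetric])

end

theorem lemma5p6:
  fixes N :: "('a, 'b) monoid_scheme" and G :: "('a \<times> ('a \<Rightarrow> 'a)) set" and e :: nat
  assumes "group N" and "cyclic_group N" and "finite (carrier N)"
    and "order N = 2 ^ e" and "e \<ge> 2"
    and "subgroup G (holomorph N)"
    and "hol_transitive N G" and "\<not> hol_regular N G"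
  shows "card (group_center ((holomorph N)\<lparr>carrier := G\<rparr>))
           * card (derived (holomorph N) G) = 2 ^ e"
proof -
  interpret grp: group N by fact
  obtain \<gamma> where g: "\<gamma> \<in> carrier N" "carrier N = range (\<lambda>k::int. \<gamma> [^]\<^bsub>N\<^esub> k)"
    using grp.cyclic_group assms(2) by blast
  have gen: "generate N {\<gamma>} = carrier N"
  proof
    show "generate N {\<gamma>} \<subseteq> carrier N" using g(1) by (intro grp.generate_incl) auto
    show "carrier N \<subseteq> generate N {\<gamma>}"
    proof
      fix x assume "x \<in> carrier N"
      then obtain k::int where x: "x = \<gamma> [^]\<^bsub>N\<^esub> k" using g(2) by auto
      have sg: "subgroup (generate N {\<gamma>}) N" using g(1) by (intro grp.generate_is_subgroup) auto
      have "\<gamma> \<in> generate N {\<gamma>}" by (rule generate.incl) simp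
      thus "x \<in> generate N {\<gamma>}" unfolding x by (rule grp.subgroup_int_pow_closed[OF sg])
    qed
  qed
  have ord: "grp.ord \<gamma> = 2^e"
    using grp.generate_pow_card[OF g(1)] gen assms(4) unfolding order_def by simp
  have cy: "cyc N \<gamma> e"
    by (intro cyc.intro cyc_axioms.intro) (use g ord assms(1,5) in auto)
  interpret C: cyc N \<gamma> e by (rule cy)
  have trans: "\<exists>h\<in>G. C.bb h = b" if b: "0 \<le> b" "b < 2^e" for b
  proof -
    have "\<one>\<^bsub>N\<^esub> \<in> carrier N" "\<gamma> [^]\<^bsub>N\<^esub> b \<in> carrier N" using g(1) by auto
    then obtain h where h: "h \<in> G" "hol_act N h \<one>\<^bsub>N\<^esub> = \<gamma> [^]\<^bsub>N\<^esub> b"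
      using assms(7) unfolding hol_transitive_def by blast
    have hc: "h \<in> carrier (holomorph N)" using h(1) subgroup.subset[OF assms(6)] by blast
    have "snd h \<one>\<^bsub>N\<^esub> = snd h (\<gamma> [^]\<^bsub>N\<^esub> (0::int))" by simp
    also have "\<dots> = \<gamma> [^]\<^bsub>N\<^esub> (C.aa h * 0)" by (rule C.snd_pow[OF hc])
    finally have s1: "snd h \<one>\<^bsub>N\<^esub> = \<one>\<^bsub>N\<^esub>" by simp
    have "fst h \<in> carrier N" using C.HH_memD[OF hc] by simp
    hence "fst h = \<gamma> [^]\<^bsub>N\<^esub> b" using h(2) s1 unfolding hol_act_def by simp
    hence "C.bb h = b mod 2^e" unfolding C.bb_def by simp
    thus ?thesis using b h(1) by auto
  qed
  have nonreg: "\<exists>\<delta>\<in>G. C.bb \<delta> = 0 \<and> C.aa \<delta> \<noteq> 1"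
  proof -
    have one_in: "\<one>\<^bsub>holomorph N\<^esub> \<in> {g \<in> G. hol_act N g \<one>\<^bsub>N\<^esub> = \<one>\<^bsub>N\<^esub>}"
      using subgroup.one_closed[OF assms(6)] by (simp add: C.HH_one hol_act_def)
    have "{g \<in> G. hol_act N g \<one>\<^bsub>N\<^esub> = \<one>\<^bsub>N\<^esub>} \<noteq> {\<one>\<^bsub>holomorph N\<^esub>}"
      using assms(7,8) unfolding hol_regular_def by blast
    then obtain \<delta> where d: "\<delta> \<in> G" "hol_act N \<delta> \<one>\<^bsub>N\<^esub> = \<one>\<^bsub>N\<^esub>" "\<delta> \<noteq> \<one>\<^bsub>holomorph N\<^esub>"
      using one_in by blast
    have dc: "\<delta> \<in> carrier (holomorph N)" using d(1) subgroup.subset[OF assms(6)] by blast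
    have "snd \<delta> \<one>\<^bsub>N\<^esub> = snd \<delta> (\<gamma> [^]\<^bsub>N\<^esub> (0::int))" by simp
    also have "\<dots> = \<gamma> [^]\<^bsub>N\<^esub> (C.aa \<delta> * 0)" by (rule C.snd_pow[OF dc])
    finally have s1: "snd \<delta> \<one>\<^bsub>N\<^esub> = \<one>\<^bsub>N\<^esub>" by simp
    have "fst \<delta> \<in> carrier N" using C.HH_memD[OF dc] by simp
    hence "fst \<delta> = \<one>\<^bsub>N\<^esub>" using d(2) s1 unfolding hol_act_def by simp
    hence b0: "C.bb \<delta> = C.bb \<one>\<^bsub>holomorph N\<^esub>" unfolding C.bb_def C.HH_one by simp
    have "C.aa \<delta> \<noteq> 1"
    proof
      assume "C.aa \<delta> = 1"
      hence "C.aa \<delta> = C.aa \<one>\<^bsub>holomorph N\<^esub>" using C.aa_one by simp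
      hence "\<delta> = \<one>\<^bsub>holomorph N\<^esub>" using C.coord_inj[OF dc _ b0] by simp
      thus False using d(3) by simp
    qed
    thus ?thesis using d(1) b0 C.bb_one by auto
  qed
  interpret M: mainloc N \<gamma> e G
    by (rule mainloc.intro[OF cy mainloc_axioms.intro[OF assms(6) trans nonreg]])
  show ?thesis by (rule M.main_result)
qed


end
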